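(* Let $n\ge 2$ and let $-1=x_1<x_2<\cdots<x_n=1$ be real numbers, and let $U_X=\{-1,1\}\times\{x_1,\ldots,x_n\}$. 1. For any labels $y_1,\ldots,y_n\in\mathbb{R}$, there exists $\mu\in\mathcal{M}(\mathbb{U},\mathbb{R})$ supported in $U_X$ which is optimal (attains the infimum) for the regression problem $$\inf_{\mu\in\mathcal{M}(\mathbb{U},\mathbb{R})}\int_{\mathbb{U}}|d\mu(u)| \quad\text{subject to}\quad f_\mu(x_i)=y_i\ \ \forall i\in[n].$$ 2. For any $k\ge1$ and labels $y_1,\ldots,y_n\in[k]$, there exists $\nu\in\mathcal{M}(\mathbb{U},\mathbb{R}^k)$ supported in $U_X$ which is optimal (attains the infimum) for the classification problem $$\inf_{\mu\in\mathcal{M}(\mathbb{U},\mathbb{R}^k)}\int_{\mathbb{U}}\|d\mu(u)\| \quad\text{subject to}\quad (e_{y_i}-e_l)^T f_\mu(x_i)\ge \mathbb{1}(y_i\neq l)\ \ \forall i\in[n],\ \forall l\in[k].$$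
   Context: $[n]=\{1,\ldots,n\}$; $e_j$ is the $j$-th canonical basis vector of $\mathbb{R}^k$; $\mathbb{1}(y_i\neq l)$ is $1$ if $y_i\neq l$ and $0$ otherwise. Let $\mathbb{U}=\{-1,1\}\times[-1,1]$. For $u=(s,c)\in\mathbb{U}$ and $x\in\mathbb{R}$ let $\phi_u(x)=(s(x-c))_+$, where $(t)_+=\max(t,0)$. $\mathcal{M}(\mathbb{U},\mathbb{R}^k)$ denotes the set of (finite) signed Radon measures on $\mathbb{U}$ with values in $\mathbb{R}^k$, and $f_\mu(x)=\int_{\mathbb{U}}\phi_u(x)\,d\mu(u)\in\mathbb{R}^k$. $\int_{\mathbb{U}}|d\mu(u)|$ is the total variation of a real measure and $\int_{\mathbb{U}}\|d\mu(u)\|$ is the total variation of a vector measure with respect to the Euclidean norm on $\mathbb{R}^k$. *)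

theory Defs
  imports "HOL-Analysis.Analysis"
begin

definition UU :: "(real \<times> real) set" where
  "UU = {-1, 1} \<times> {-1..1}"

definition phi :: "real \<times> real \<Rightarrow> real \<Rightarrow> real" where
  "phi u x = max (fst u * (x - snd u)) 0"

text \<open>A finite signed Radon measure on U with values in a Euclidean space 'a is
  represented (polar decomposition) as h \<cdot> M, where M is a finite positive Borel
  measure on U and h is M-integrable.\<close>
definition is_vmeasure :: "(real \<times> real) measure \<Rightarrow> (real \<times> real \<Rightarrow> 'a::euclidean_space) \<Rightarrow> bool" where
  "is_vmeasure M h \<longleftrightarrow> sets M = sets (restrict_space borel UU) \<and> finite_measure M \<and> integrable M h"

definition fmu :: "(real \<times> real) measure \<Rightarrow> (real \<times> real \<Rightarrow> 'a::euclidean_space) \<Rightarrow> real \<Rightarrow> 'a" where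
  "fmu M h x = (\<integral>u. phi u x *\<^sub>R h u \<partial>M)"

definition tv :: "(real \<times> real) measure \<Rightarrow> (real \<times> real \<Rightarrow> 'a::euclidean_space) \<Rightarrow> real" where
  "tv M h = (\<integral>u. norm (h u) \<partial>M)"

definition supported_in :: "(real \<times> real) measure \<Rightarrow> (real \<times> real \<Rightarrow> 'a::euclidean_space) \<Rightarrow> (real \<times> real) set \<Rightarrow> bool" where
  "supported_in M h S \<longleftrightarrow> (AE u in M. u \<notin> S \<longrightarrow> h u = 0)"

definition regr_feasible :: "nat \<Rightarrow> (nat \<Rightarrow> real) \<Rightarrow> (nat \<Rightarrow> real) \<Rightarrow> (real \<times> real) measure \<Rightarrow> (real \<times> real \<Rightarrow> real) \<Rightarrow> bool" where
  "regr_feasible n x y M h \<longleftrightarrow> is_vmeasure M h \<and> (\<forall>i\<in>{1..n}. fmu M h (x i) = y i)"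

definition class_feasible :: "nat \<Rightarrow> (nat \<Rightarrow> real) \<Rightarrow> (nat \<Rightarrow> 'k::finite) \<Rightarrow> (real \<times> real) measure \<Rightarrow> (real \<times> real \<Rightarrow> real ^ 'k) \<Rightarrow> bool" where
  "class_feasible n x y M h \<longleftrightarrow> is_vmeasure M h \<and>
     (\<forall>i\<in>{1..n}. \<forall>l. (axis (y i) 1 - axis l 1) \<bullet> fmu M h (x i) \<ge> (if y i \<noteq> l then 1 else 0))"

end

theory Submission imports Defs begin

locale grid =
  fixes n :: nat and x :: "nat \<Rightarrow> real"
  assumes n2: "n \<ge> 2" and x1: "x 1 = -1" and xn: "x n = 1"
    and mono: "\<And>i j. i \<in> {1..n} \<Longrightarrow> j \<in> {1..n} \<Longrightarrow> i < j \<Longrightarrow> x i < x j"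
begin

definition II :: "(real \<times> nat) set" where "II = {-1,1} \<times> {1..n}"
definition q :: "real \<times> nat \<Rightarrow> real \<times> real" where "q p = (fst p, x (snd p))"
definition vl :: "(real \<times> nat \<Rightarrow> 'a::euclidean_space) \<Rightarrow> real \<Rightarrow> 'a" where
  "vl a t = (\<Sum>p\<in>II. phi (q p) t *\<^sub>R a p)"
definition cost :: "(real \<times> nat \<Rightarrow> 'a::euclidean_space) \<Rightarrow> real" where
  "cost a = (\<Sum>p\<in>II. norm (a p))"

lemma finII: "finite II" unfolding II_def by auto

lemma mono_le: "i \<in> {1..n} \<Longrightarrow> j \<in> {1..n} \<Longrightarrow> i \<le> j \<Longrightarrow> x i \<le> x j"
  using mono by (cases "i = j") (auto simp: less_le)

lemma x_range: "i \<in> {1..n} \<Longrightarrow> x i \<in> {-1..1}"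
  using mono_le[of 1 i] mono_le[of i n] n2 x1 xn by auto

lemma inj_x: "inj_on x {1..n}"
proof (rule inj_onI)
  fix i j assume "i \<in> {1..n}" "j \<in> {1..n}" "x i = x j"
  then show "i = j" using mono[of i j] mono[of j i] by (cases i j rule: linorder_cases) auto
qed

lemma inj_q: "inj_on q II"
proof (rule inj_onI)
  fix p p' assume "p \<in> II" "p' \<in> II" "q p = q p'"
  then have "fst p = fst p'" "x (snd p) = x (snd p')" "snd p \<in> {1..n}" "snd p' \<in> {1..n}"
    unfolding II_def q_def by auto
  then show "p = p'" using inj_onD[OF inj_x] by (metis prod_eqI)
qed

lemma q_UU: "p \<in> II \<Longrightarrow> q p \<in> UU"
  unfolding II_def q_def UU_def using x_range by auto

lemma q_S: "p \<in> II \<Longrightarrow> q p \<in> {-1, 1} \<times> x ` {1..n}"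
  unfolding II_def q_def by auto

lemma phi_meas: "(\<lambda>u. phi u t) \<in> borel_measurable borel"
  unfolding phi_def by (intro borel_measurable_continuous_onI continuous_intros)

lemma phi_bound: "u \<in> UU \<Longrightarrow> t \<in> {-1..1} \<Longrightarrow> 0 \<le> phi u t \<and> phi u t \<le> 2"
  unfolding phi_def UU_def by (cases u) (auto simp: abs_if)

lemma realize:
  fixes a :: "real \<times> nat \<Rightarrow> 'a::euclidean_space"
  shows "\<exists>M h. is_vmeasure M h \<and> supported_in M h ({-1, 1} \<times> x ` {1..n})
     \<and> (\<forall>t. fmu M h t = vl a t) \<and> tv M h = cost a"
proof -
  define N where "N = restrict_space borel UU"
  define M where "M = distr (count_space II) N q"
  define h where "h u = (\<Sum>p\<in>II. indicator {q p} u *\<^sub>R a p)" for u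
  have spN: "space N = UU" unfolding N_def by (simp add: space_restrict_space)
  have qm: "q \<in> count_space II \<rightarrow>\<^sub>M N"
    unfolding measurable_count_space_eq1 spN using q_UU by auto
  have hq: "h (q p) = a p" if "p \<in> II" for p
  proof -
    have "h (q p) = (\<Sum>p'\<in>II. (if p' = p then a p else 0))"
      unfolding h_def
      by (intro sum.cong refl) (use inj_q that in \<open>auto simp: inj_on_eq_iff indicator_def\<close>)
    also have "\<dots> = a p" using that finII by simp
    finally show ?thesis .
  qed
  have h0: "h u = 0" if "u \<notin> {-1, 1} \<times> x ` {1..n}" for u
    unfolding h_def using q_S that by (intro sum.neutral) (auto simp: indicator_def)
  have hmB: "h \<in> borel_measurable borel"
    unfolding h_def by measurable
  then have hm: "h \<in> borel_measurable N"
    unfolding N_def by (rule measurable_restrict_space1)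
  have fm: "(\<lambda>u. phi u t *\<^sub>R h u) \<in> borel_measurable N" for t
    unfolding N_def using phi_meas hmB by (intro measurable_restrict_space1) measurable
  have nm: "(\<lambda>u. norm (h u)) \<in> borel_measurable N"
    using hm by measurable
  have "is_vmeasure M h"
    unfolding is_vmeasure_def M_def
  proof (intro conjI)
    show "sets (distr (count_space II) N q) = sets (restrict_space borel UU)"
      by (simp add: N_def)
    show "finite_measure (distr (count_space II) N q)"
      by (intro finite_measure.finite_measure_distr finite_measure_count_space finII qm)
    show "integrable (distr (count_space II) N q) h"
      by (subst integrable_distr_eq[OF qm hm]) (intro integrable_count_space finII)
  qed
  moreover have "supported_in M h ({-1, 1} \<times> x ` {1..n})"
    unfolding supported_in_def using h0 by simp
  moreover have "fmu M h t = vl a t" for t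
  proof -
    have "fmu M h t = (\<integral>p. phi (q p) t *\<^sub>R h (q p) \<partial>count_space II)"
      unfolding fmu_def M_def by (rule integral_distr[OF qm fm])
    also have "\<dots> = (\<Sum>p\<in>II. phi (q p) t *\<^sub>R h (q p))"
      by (rule lebesgue_integral_count_space_finite[OF finII])
    also have "\<dots> = vl a t" unfolding vl_def using hq by (intro sum.cong) auto
    finally show ?thesis .
  qed
  moreover have "tv M h = cost a"
  proof -
    have "tv M h = (\<integral>p. norm (h (q p)) \<partial>count_space II)"
      unfolding tv_def M_def by (rule integral_distr[OF qm nm])
    also have "\<dots> = (\<Sum>p\<in>II. norm (h (q p)))"
      by (rule lebesgue_integral_count_space_finite[OF finII])
    also have "\<dots> = cost a" unfolding cost_def using hq by (intro sum.cong) auto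
    finally show ?thesis .
  qed
  ultimately show ?thesis by blast
qed

definition Im :: "nat \<Rightarrow> real set" where
  "Im m = (if m+1 = n then {x m .. x (m+1)} else {x m ..< x (m+1)})"
definition tt :: "nat \<Rightarrow> real \<Rightarrow> real" where "tt m c = (c - x m)/(x (m+1) - x m)"
definition w :: "nat \<Rightarrow> real \<Rightarrow> real" where
  "w j c = (\<Sum>m\<in>{1..<n}. indicator (Im m) c * ((if j = m then 1 - tt m c else 0) + (if j = m+1 then tt m c else 0)))"
definition g :: "real \<times> nat \<Rightarrow> real \<times> real \<Rightarrow> real" where
  "g p u = (1 + fst p * fst u)/2 * w (snd p) (snd u)"

lemma Im_borel[measurable]: "Im m \<in> sets borel"
  unfolding Im_def by simp

lemma w_meas[measurable]: "w j \<in> borel_measurable borel"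
  unfolding w_def tt_def by measurable

lemma g_meas: "g p \<in> borel_measurable borel"
proof -
  have 1: "(\<lambda>u::real\<times>real. (1 + fst p * fst u)/2) \<in> borel_measurable borel"
    by (intro borel_measurable_continuous_onI continuous_intros) auto
  have "(\<lambda>u::real\<times>real. snd u) \<in> borel_measurable borel"
    by (intro borel_measurable_continuous_onI continuous_intros)
  from measurable_compose[OF this w_meas]
  have 2: "(\<lambda>u::real\<times>real. w (snd p) (snd u)) \<in> borel_measurable borel" .
  show ?thesis unfolding g_def using 1 2 by (rule borel_measurable_times)
qed

lemma locate:
  assumes "c \<in> {-1..1}"
  shows "\<exists>m0\<in>{1..<n}. c \<in> Im m0 \<and> (\<forall>m\<in>{1..<n}. c \<in> Im m \<longrightarrow> m = m0)"
proof -
  define A where "A = {m\<in>{1..<n}. x m \<le> c}"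
  have finA: "finite A" unfolding A_def by auto
  have "1 \<in> A" unfolding A_def using n2 x1 assms by auto
  then have neA: "A \<noteq> {}" by auto
  define m0 where "m0 = Max A"
  have m0A: "m0 \<in> A" unfolding m0_def using finA neA by (rule Max_in)
  have m0max: "m \<le> m0" if "m \<in> A" for m unfolding m0_def using finA that by simp
  have m0r: "m0 \<in> {1..<n}" "x m0 \<le> c" using m0A unfolding A_def by auto
  have cIm: "c \<in> Im m0"
  proof (cases "m0 + 1 = n")
    case True then show ?thesis unfolding Im_def using m0r assms xn by auto
  next
    case False
    then have "m0 + 1 \<in> {1..<n}" using m0r by auto
    moreover have "m0 + 1 \<notin> A" using m0max by fastforce
    ultimately have "c < x (m0+1)" unfolding A_def by auto
    then show ?thesis unfolding Im_def using m0r False by auto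
  qed
  have uniq: "m = m0" if "m \<in> {1..<n}" "c \<in> Im m" for m
  proof (rule ccontr)
    assume "m \<noteq> m0"
    then consider "m < m0" | "m0 < m" by linarith
    then show False
    proof cases
      case 1
      then have "m + 1 \<noteq> n" using m0r by auto
      then have "c < x (m+1)" using that unfolding Im_def by auto
      moreover have "x (m+1) \<le> x m0" using 1 m0r that by (intro mono_le) auto
      ultimately show False using m0r by auto
    next
      case 2
      then have "m0 + 1 \<noteq> n" using that by auto
      then have "c < x (m0+1)" using cIm unfolding Im_def by auto
      moreover have "x (m0+1) \<le> x m" using 2 m0r that by (intro mono_le) auto
      moreover have "x m \<le> c" using that unfolding Im_def by (auto split: if_splits)
      ultimately show False by auto
    qed
  qed
  show ?thesis using m0r cIm uniq by blast
qed

lemma tt_bounds: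
  assumes "m \<in> {1..<n}" "c \<in> Im m"
  shows "0 \<le> tt m c" "tt m c \<le> 1" "x m < x (m+1)"
proof -
  show lt: "x m < x (m+1)" using assms by (intro mono) auto
  have "x m \<le> c" "c \<le> x (m+1)" using assms unfolding Im_def by (auto split: if_splits)
  then show "0 \<le> tt m c" "tt m c \<le> 1" unfolding tt_def using lt by (auto simp: divide_simps)
qed

lemma w_eq:
  assumes "m0 \<in> {1..<n}" "c \<in> Im m0" "\<forall>m\<in>{1..<n}. c \<in> Im m \<longrightarrow> m = m0"
  shows "w j c = (if j = m0 then 1 - tt m0 c else 0) + (if j = m0+1 then tt m0 c else 0)"
proof -
  have "w j c = (\<Sum>m\<in>{1..<n}. (if m = m0 then (if j = m0 then 1 - tt m0 c else 0) + (if j = m0+1 then tt m0 c else 0) else 0))"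
    unfolding w_def
  proof (intro sum.cong refl)
    fix m assume m: "m \<in> {1..<n}"
    show "indicator (Im m) c * ((if j = m then 1 - tt m c else 0) + (if j = m + 1 then tt m c else 0)) =
      (if m = m0 then (if j = m0 then 1 - tt m0 c else 0) + (if j = m0+1 then tt m0 c else 0) else 0)"
    proof (cases "m = m0")
      case True then show ?thesis using assms(2) by simp
    next
      case False then have "c \<notin> Im m" using assms(3) m by blast
      then show ?thesis using False by simp
    qed
  qed
  also have "\<dots> = (if j = m0 then 1 - tt m0 c else 0) + (if j = m0+1 then tt m0 c else 0)"
    using assms(1) by simp
  finally show ?thesis .
qed

lemma sum_w:
  assumes "m0 \<in> {1..<n}" "c \<in> Im m0" "\<forall>m\<in>{1..<n}. c \<in> Im m \<longrightarrow> m = m0"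
  shows "(\<Sum>j\<in>{1..n}. w j c * G j) = (1 - tt m0 c) * G m0 + tt m0 c * G (m0+1)"
proof -
  have "(\<Sum>j\<in>{1..n}. w j c * G j) = (\<Sum>j\<in>{1..n}. (if j = m0 then (1 - tt m0 c) * G m0 else 0) + (if j = m0+1 then tt m0 c * G (m0+1) else 0))"
    using w_eq[OF assms] by (intro sum.cong refl) (simp add: distrib_right)
  also have "\<dots> = (1 - tt m0 c) * G m0 + tt m0 c * G (m0+1)"
    using assms(1) by (simp add: sum.distrib)
  finally show ?thesis .
qed

lemma phi_interp:
  assumes "a < b" "a \<le> c" "c \<le> b" "s \<in> {-1,1}" "z \<le> a \<or> b \<le> z"
  shows "phi (s,c) z = (1 - (c-a)/(b-a)) * phi (s,a) z + (c-a)/(b-a) * phi (s,b) z"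
proof -
  define t where "t = (c-a)/(b-a)"
  have c: "c = a + t * (b - a)" unfolding t_def using assms by auto
  have t: "0 \<le> t" "t \<le> 1" unfolding t_def using assms by (auto simp: divide_simps)
  have "max (s * (z - (a + t * (b - a)))) 0 = (1 - t) * max (s * (z - a)) 0 + t * max (s * (z - b)) 0"
  proof -
    from assms(4) consider "s = -1" | "s = 1" by auto
    then show ?thesis
    proof cases
      case 1
      show ?thesis using assms(5)
      proof
        assume z: "z \<le> a"
        have "0 \<le> t * (b - a)" using t assms(1) by simp
        then have "z - b \<le> 0" "z - a \<le> 0" "z - (a + t * (b - a)) \<le> 0" using z assms(1) t
          by linarith+
        then show ?thesis using 1 by (simp add: algebra_simps)
      next
        assume z: "b \<le> z"
        have "t * (b - a) \<le> b - a" using t assms(1) by (simp add: mult_left_le_one_le)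
        then have "0 \<le> z - (a + t * (b - a))" using z by auto
        then show ?thesis using 1 z assms(1) by (simp add: algebra_simps max_def)
      qed
    next
      case 2
      show ?thesis using assms(5)
      proof
        assume z: "z \<le> a"
        have "0 \<le> t * (b - a)" using t assms(1) by simp
        then have "z - (a + t * (b - a)) \<le> 0" using z by auto
        then show ?thesis using 2 z assms(1) by (simp add: algebra_simps max_def)
      next
        assume z: "b \<le> z"
        have "t * (b - a) \<le> b - a" using t assms(1) by (simp add: mult_left_le_one_le)
        then have "0 \<le> z - (a + t * (b - a))" using z by auto
        then show ?thesis using 2 z assms(1) by (simp add: algebra_simps max_def)
      qed
    qed
  qed
  then show ?thesis unfolding phi_def t_def[symmetric] using c by simp
qed

lemma sum_II: "(\<Sum>p\<in>II. f p) = (\<Sum>j\<in>{1..n}. f (-1, j)) + (\<Sum>j\<in>{1..n}. f (1, j))"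
  unfolding II_def by (simp add: sum.cartesian_product')

lemma g_local:
  assumes "u \<in> UU"
  obtains m0 where "m0 \<in> {1..<n}" "snd u \<in> Im m0"
    "\<And>F. (\<Sum>p\<in>II. g p u * F p) = (1 - tt m0 (snd u)) * F (fst u, m0) + tt m0 (snd u) * F (fst u, m0+1)"
    "\<And>j. 0 \<le> w j (snd u) \<and> w j (snd u) \<le> 1"
proof -
  obtain s c where u: "u = (s, c)" by (cases u)
  have s: "s \<in> {-1,1}" and c: "c \<in> {-1..1}" using assms u unfolding UU_def by auto
  obtain m0 where m0: "m0 \<in> {1..<n}" "c \<in> Im m0" "\<forall>m\<in>{1..<n}. c \<in> Im m \<longrightarrow> m = m0"
    using locate[OF c] by blast
  have t: "0 \<le> tt m0 c" "tt m0 c \<le> 1" using tt_bounds[OF m0(1,2)] by auto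
  have F: "(\<Sum>p\<in>II. g p u * F p) = (1 - tt m0 (snd u)) * F (fst u, m0) + tt m0 (snd u) * F (fst u, m0+1)" for F
  proof -
    have "(\<Sum>p\<in>II. g p u * F p) = (\<Sum>j\<in>{1..n}. w j c * F (s, j))"
    proof -
      have g1: "g (-1, j) u = (if s = -1 then w j c else 0)" "g (1, j) u = (if s = 1 then w j c else 0)" for j
        using s by (auto simp: g_def u)
      show ?thesis unfolding sum_II g1 using s by auto
    qed
    also have "\<dots> = (1 - tt m0 c) * F (s, m0) + tt m0 c * F (s, m0+1)"
      by (rule sum_w[OF m0])
    finally show ?thesis by (simp add: u)
  qed
  have W: "0 \<le> w j (snd u) \<and> w j (snd u) \<le> 1" for j
    unfolding u snd_conv w_eq[OF m0] using t by auto
  have "snd u \<in> Im m0" using m0(2) u by simp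
  from that[OF m0(1) this F W] show ?thesis .
qed

lemma g_props:
  assumes "u \<in> UU"
  shows "p \<in> II \<Longrightarrow> 0 \<le> g p u \<and> g p u \<le> 1"
    and "(\<Sum>p\<in>II. g p u) = 1"
    and "i \<in> {1..n} \<Longrightarrow> (\<Sum>p\<in>II. g p u * phi (q p) (x i)) = phi u (x i)"
proof -
  obtain m0 where m0: "m0 \<in> {1..<n}" "snd u \<in> Im m0"
    and F: "\<And>F. (\<Sum>p\<in>II. g p u * F p) = (1 - tt m0 (snd u)) * F (fst u, m0) + tt m0 (snd u) * F (fst u, m0+1)"
    and W: "\<And>j. 0 \<le> w j (snd u) \<and> w j (snd u) \<le> 1"
    using g_local[OF assms] by blast
  have s: "fst u \<in> {-1,1}" and c: "snd u \<in> {-1..1}" using assms unfolding UU_def by auto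
  show "0 \<le> g p u \<and> g p u \<le> 1" if "p \<in> II"
  proof -
    have "fst p \<in> {-1,1}" using that unfolding II_def by auto
    then have "(1 + fst p * fst u)/2 \<in> {0,1}" using s by auto
    then show ?thesis unfolding g_def using W[of "snd p"] by auto
  qed
  show "(\<Sum>p\<in>II. g p u) = 1" using F[of "\<lambda>_. 1"] by simp
  show "(\<Sum>p\<in>II. g p u * phi (q p) (x i)) = phi u (x i)" if i: "i \<in> {1..n}"
  proof -
    have lt: "x m0 < x (m0+1)" using tt_bounds[OF m0] by simp
    have cb: "x m0 \<le> snd u" "snd u \<le> x (m0+1)" using m0(2) unfolding Im_def by (auto split: if_splits)
    have z: "x i \<le> x m0 \<or> x (m0+1) \<le> x i"
    proof (cases "i \<le> m0")
      case True then show ?thesis using i m0 by (intro disjI1 mono_le) auto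
    next
      case False then show ?thesis using i m0 by (intro disjI2 mono_le) auto
    qed
    have "phi u (x i) = phi (fst u, snd u) (x i)" by simp
    also have "\<dots> = (1 - tt m0 (snd u)) * phi (fst u, x m0) (x i) + tt m0 (snd u) * phi (fst u, x (m0+1)) (x i)"
      unfolding tt_def by (rule phi_interp[OF lt cb s z])
    also have "\<dots> = (\<Sum>p\<in>II. g p u * phi (q p) (x i))"
      using F[of "\<lambda>p. phi (q p) (x i)"] by (simp add: q_def)
    finally show ?thesis by simp
  qed
qed

lemma reduce:
  fixes h :: "real \<times> real \<Rightarrow> 'a::euclidean_space"
  assumes "is_vmeasure M h"
  shows "\<exists>a. (\<forall>i\<in>{1..n}. vl a (x i) = fmu M h (x i)) \<and> cost a \<le> tv M h"
proof -
  have sM: "sets M = sets (restrict_space borel UU)" and intM: "integrable M h"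
    using assms unfolding is_vmeasure_def by auto
  have spM: "space M = UU"
    using sets_eq_imp_space_eq[OF sM] by (simp add: space_restrict_space)
  have bm: "f \<in> borel_measurable M" if "f \<in> borel_measurable borel" for f :: "real \<times> real \<Rightarrow> real"
  proof -
    have "f \<in> borel_measurable (restrict_space borel UU)" using that by (rule measurable_restrict_space1)
    then show ?thesis unfolding measurable_cong_sets[OF sM refl] .
  qed
  have hm: "h \<in> borel_measurable M" using intM by auto
  have gm: "g p \<in> borel_measurable M" for p using bm[OF g_meas] .
  have phim: "(\<lambda>u. phi u t) \<in> borel_measurable M" for t using bm[OF phi_meas] .
  define a where "a p = (\<integral>u. g p u *\<^sub>R h u \<partial>M)" for p
  have gint: "integrable M (\<lambda>u. g p u *\<^sub>R h u)" if "p \<in> II" for p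
  proof (rule Bochner_Integration.integrable_bound[OF intM])
    show "(\<lambda>u. g p u *\<^sub>R h u) \<in> borel_measurable M" using gm hm by measurable
    show "AE u in M. norm (g p u *\<^sub>R h u) \<le> norm (h u)"
    proof (rule AE_I2)
      fix u assume "u \<in> space M"
      then have "0 \<le> g p u" "g p u \<le> 1" using g_props(1)[of u p] that spM by auto
      then show "norm (g p u *\<^sub>R h u) \<le> norm (h u)"
        by (simp add: mult_left_le_one_le)
    qed
  qed
  have vl_eq: "vl a (x i) = fmu M h (x i)" if i: "i \<in> {1..n}" for i
  proof -
    have "vl a (x i) = (\<Sum>p\<in>II. (\<integral>u. phi (q p) (x i) *\<^sub>R (g p u *\<^sub>R h u) \<partial>M))"
      unfolding vl_def a_def by (intro sum.cong refl) (simp only: integral_scaleR_right)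
    also have "\<dots> = (\<integral>u. (\<Sum>p\<in>II. phi (q p) (x i) *\<^sub>R (g p u *\<^sub>R h u)) \<partial>M)"
      by (subst Bochner_Integration.integral_sum) (auto intro!: integrable_scaleR_right gint simp del: scaleR_scaleR)
    also have "\<dots> = (\<integral>u. phi u (x i) *\<^sub>R h u \<partial>M)"
    proof (rule Bochner_Integration.integral_cong[OF refl])
      fix u assume u: "u \<in> space M"
      have "(\<Sum>p\<in>II. phi (q p) (x i) *\<^sub>R (g p u *\<^sub>R h u)) = (\<Sum>p\<in>II. g p u * phi (q p) (x i)) *\<^sub>R h u"
        by (simp add: scaleR_sum_left mult.commute)
      also have "\<dots> = phi u (x i) *\<^sub>R h u" using g_props(3)[of u i] u spM i by simp
      finally show "(\<Sum>p\<in>II. phi (q p) (x i) *\<^sub>R (g p u *\<^sub>R h u)) = phi u (x i) *\<^sub>R h u" .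
    qed
    finally show ?thesis unfolding fmu_def .
  qed
  have "cost a \<le> (\<Sum>p\<in>II. (\<integral>u. norm (g p u *\<^sub>R h u) \<partial>M))"
    unfolding cost_def a_def by (intro sum_mono integral_norm_bound)
  also have "\<dots> = (\<Sum>p\<in>II. (\<integral>u. g p u * norm (h u) \<partial>M))"
  proof (intro sum.cong refl Bochner_Integration.integral_cong)
    fix p u assume "p \<in> II" "u \<in> space M"
    then have "0 \<le> g p u" using g_props(1)[of u p] spM by auto
    then show "norm (g p u *\<^sub>R h u) = g p u * norm (h u)" by simp
  qed
  also have "\<dots> = (\<integral>u. (\<Sum>p\<in>II. g p u * norm (h u)) \<partial>M)"
  proof (rule Bochner_Integration.integral_sum[where I=II and f="\<lambda>p u. g p u * norm (h u)", symmetric])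
    fix p assume "p \<in> II"
    have "integrable M (\<lambda>u. norm (g p u *\<^sub>R h u))" using gint[OF \<open>p \<in> II\<close>] by (rule integrable_norm)
    then show "integrable M (\<lambda>u. g p u * norm (h u))"
    proof (rule Bochner_Integration.integrable_cong[THEN iffD1, OF refl, rotated])
      fix u assume "u \<in> space M"
      then have "0 \<le> g p u" using g_props(1)[of u p] spM \<open>p \<in> II\<close> by auto
      then show "norm (g p u *\<^sub>R h u) = g p u * norm (h u)" by simp
    qed
  qed
  also have "\<dots> = (\<integral>u. norm (h u) \<partial>M)"
  proof (rule Bochner_Integration.integral_cong[OF refl])
    fix u assume "u \<in> space M"
    then show "(\<Sum>p\<in>II. g p u * norm (h u)) = norm (h u)"
      using g_props(2)[of u] spM by (simp add: sum_distrib_right[symmetric])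
  qed
  finally have "cost a \<le> tv M h" unfolding tv_def .
  then show ?thesis using vl_eq by blast
qed

definition dd :: "nat \<Rightarrow> real" where "dd m = x (m+1) - x m"

definition hc :: "nat \<Rightarrow> real \<times> nat \<Rightarrow> real" where
  "hc j p = (if j = 1 then (if p = (-1, 2) then 1 / dd 1 else 0)
     else if j = n then (if p = (1, n-1) then 1 / dd (n-1) else 0)
     else (if p = (1, j-1) then 1 / dd (j-1) else 0) - (if p = (1, j) then 1 / dd (j-1) + 1 / dd j else 0)
        + (if p = (1, j+1) then 1 / dd j else 0))"

lemma sum_delta_II: "p0 \<in> II \<Longrightarrow> (\<Sum>p\<in>II. (if p = p0 then c else 0) * F p) = (c::real) * F p0"
proof -
  assume p0: "p0 \<in> II"
  have "(\<Sum>p\<in>II. (if p = p0 then c else 0) * F p) = (\<Sum>p\<in>II. (if p = p0 then c * F p0 else 0))"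
    by (intro sum.cong refl) auto
  also have "\<dots> = c * F p0" using p0 finII by simp
  finally show ?thesis .
qed

lemma interior_hat:
  fixes a b c z :: real
  assumes "a < b" "b < c" "z \<le> a \<or> z = b \<or> c \<le> z"
  shows "max (z - a) 0 / (b - a) - max (z - b) 0 * (1 / (b - a) + 1 / (c - b)) + max (z - c) 0 / (c - b)
     = (if z = b then 1 else 0)"
  using assms(3)
proof (elim disjE)
  assume "z \<le> a" then show ?thesis using assms by (simp add: max_def)
next
  assume "z = b" then show ?thesis using assms by (simp add: max_def)
next
  assume z: "c \<le> z"
  then have "max (z - a) 0 = z - a" "max (z - b) 0 = z - b" "max (z - c) 0 = z - c" using assms by auto
  moreover have "(z - a) / (b - a) = 1 + (z - b) / (b - a)" using assms by (simp add: field_simps)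
  moreover have "(z - c) / (c - b) = (z - b) / (c - b) - 1" using assms by (simp add: field_simps)
  moreover have "(z - b) * (1 / (b - a) + 1 / (c - b)) = (z - b) / (b - a) + (z - b) / (c - b)"
    by (simp add: distrib_left)
  ultimately show ?thesis using assms z by simp
qed

lemma hat:
  assumes i: "i \<in> {1..n}" and j: "j \<in> {1..n}"
  shows "(\<Sum>p\<in>II. hc j p * phi (q p) (x i)) = (if i = j then 1 else 0)"
proof -
  have dpos: "0 < dd m" if "m \<in> {1..<n}" for m unfolding dd_def using mono[of m "m+1"] that by auto
  consider "j = 1" | "j \<noteq> 1" "j = n" | "j \<noteq> 1" "j \<noteq> n" by blast
  then show ?thesis
  proof cases
    case 1
    have in2: "(-1, 2) \<in> II" using n2 unfolding II_def by auto
    have "(\<Sum>p\<in>II. hc j p * phi (q p) (x i)) = 1 / dd 1 * phi (q (-1, 2)) (x i)"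
      unfolding hc_def using 1 sum_delta_II[OF in2] by simp
    also have "\<dots> = (if i = j then 1 else 0)"
    proof (cases "i = 1")
      case True
      have "0 < dd 1" using dpos n2 by auto
      then show ?thesis using True 1 unfolding phi_def q_def dd_def by (simp add: max_def numeral_2_eq_2)
    next
      case False
      then have "x 2 \<le> x i" using i n2 by (intro mono_le) auto
      then show ?thesis using False 1 unfolding phi_def q_def by (simp add: max_def)
    qed
    finally show ?thesis .
  next
    case 2
    have inn: "(1, n-1) \<in> II" using n2 unfolding II_def by auto
    have "(\<Sum>p\<in>II. hc j p * phi (q p) (x i)) = 1 / dd (n-1) * phi (q (1, n-1)) (x i)"
      unfolding hc_def using 2 sum_delta_II[OF inn] by simp
    also have "\<dots> = (if i = j then 1 else 0)"
    proof (cases "i = n")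
      case True
      have "0 < dd (n-1)" using dpos n2 by auto
      moreover have "n - 1 + 1 = n" using n2 by auto
      ultimately show ?thesis using True 2 unfolding phi_def q_def dd_def by (simp add: max_def)
    next
      case False
      then have "x i \<le> x (n-1)" using i n2 by (intro mono_le) auto
      then show ?thesis using False 2 unfolding phi_def q_def by (simp add: max_def)
    qed
    finally show ?thesis .
  next
    case 3
    have j1: "j - 1 \<in> {1..n}" "j + 1 \<in> {1..n}" "j - 1 + 1 = j" using 3 j by auto
    have in1: "(1, j-1) \<in> II" "(1, j) \<in> II" "(1, j+1) \<in> II" using j1 j unfolding II_def by auto
    have "(\<Sum>p\<in>II. hc j p * phi (q p) (x i)) =
        (\<Sum>p\<in>II. (if p = (1, j-1) then 1 / dd (j-1) else 0) * phi (q p) (x i))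
      - (\<Sum>p\<in>II. (if p = (1, j) then 1 / dd (j-1) + 1 / dd j else 0) * phi (q p) (x i))
      + (\<Sum>p\<in>II. (if p = (1, j+1) then 1 / dd j else 0) * phi (q p) (x i))"
      unfolding hc_def using 3 by (simp add: sum.distrib sum_subtractf algebra_simps)
    also have "\<dots> = 1 / dd (j-1) * phi (q (1, j-1)) (x i) - (1 / dd (j-1) + 1 / dd j) * phi (q (1, j)) (x i)
        + 1 / dd j * phi (q (1, j+1)) (x i)"
      by (simp only: sum_delta_II[OF in1(1)] sum_delta_II[OF in1(2)] sum_delta_II[OF in1(3)])
    also have "\<dots> = max (x i - x (j-1)) 0 / (x j - x (j-1)) - max (x i - x j) 0 * (1 / (x j - x (j-1)) + 1 / (x (j+1) - x j))
        + max (x i - x (j+1)) 0 / (x (j+1) - x j)"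
      unfolding phi_def q_def dd_def using j1 by simp
    also have "\<dots> = (if x i = x j then 1 else 0)"
    proof (rule interior_hat)
      show "x (j-1) < x j" "x j < x (j+1)" using j1 j 3 by (auto intro!: mono)
      show "x i \<le> x (j - 1) \<or> x i = x j \<or> x (j + 1) \<le> x i"
      proof (cases i j rule: linorder_cases)
        case less then show ?thesis using i j1 by (intro disjI1 mono_le) auto
      next
        case equal then show ?thesis by simp
      next
        case greater then show ?thesis using i j1 by (intro disjI2 disjI1 mono_le) auto
      qed
    qed
    also have "\<dots> = (if i = j then 1 else 0)" using inj_onD[OF inj_x _ i j] by auto
    finally show ?thesis .
  qed
qed

lemma interpolate:
  fixes v :: "nat \<Rightarrow> 'a::euclidean_space"
  shows "\<exists>a. \<forall>i\<in>{1..n}. vl a (x i) = v i"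
proof -
  define a where "a p = (\<Sum>j\<in>{1..n}. hc j p *\<^sub>R v j)" for p
  have "vl a (x i) = v i" if i: "i \<in> {1..n}" for i
  proof -
    have "vl a (x i) = (\<Sum>p\<in>II. \<Sum>j\<in>{1..n}. (hc j p * phi (q p) (x i)) *\<^sub>R v j)"
      unfolding vl_def a_def by (simp add: scaleR_sum_right mult.commute)
    also have "\<dots> = (\<Sum>j\<in>{1..n}. \<Sum>p\<in>II. (hc j p * phi (q p) (x i)) *\<^sub>R v j)"
      by (rule sum.swap)
    also have "\<dots> = (\<Sum>j\<in>{1..n}. (if i = j then 1 else 0) *\<^sub>R v j)"
      by (intro sum.cong refl) (simp add: scaleR_sum_left[symmetric] hat[OF i])
    also have "\<dots> = (\<Sum>j\<in>{1..n}. (if i = j then v j else 0))"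
      by (intro sum.cong refl) simp
    also have "\<dots> = v i" using i by (subst sum.delta') auto
    finally show ?thesis .
  qed
  then show ?thesis by blast
qed

lemma cont_coord: "continuous_on S (\<lambda>a::'b \<Rightarrow> 'c::topological_space. a p)"
  by (rule continuous_on_subset[OF continuous_on_product_coordinates]) simp

lemma cont_vl: "continuous_on S (\<lambda>a::real \<times> nat \<Rightarrow> 'a::euclidean_space. vl a t)"
  unfolding vl_def by (intro continuous_on_sum continuous_on_scaleR continuous_on_const cont_coord)

lemma cont_cost: "continuous_on S (\<lambda>a::real \<times> nat \<Rightarrow> 'a::euclidean_space. cost a)"
  unfolding cost_def by (intro continuous_on_sum continuous_on_norm cont_coord)

lemma restrict_vl: "vl (\<lambda>p. if p \<in> II then a p else 0) t = vl a t"
  unfolding vl_def by (intro sum.cong refl) auto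

lemma restrict_cost: "cost (\<lambda>p. if p \<in> II then a p else 0) = cost a"
  unfolding cost_def by (intro sum.cong refl) auto

theorem generic:
  fixes K :: "nat \<Rightarrow> 'a::euclidean_space set"
  assumes closedK: "\<And>i. i \<in> {1..n} \<Longrightarrow> closed (K i)"
    and neK: "\<And>i. i \<in> {1..n} \<Longrightarrow> K i \<noteq> {}"
  shows "\<exists>M h. (is_vmeasure M h \<and> (\<forall>i\<in>{1..n}. fmu M h (x i) \<in> K i))
     \<and> supported_in M h ({-1, 1} \<times> x ` {1..n})
     \<and> (\<forall>M' h'. (is_vmeasure M' h' \<and> (\<forall>i\<in>{1..n}. fmu M' h' (x i) \<in> K i)) \<longrightarrow> tv M h \<le> tv M' h')"
proof -
  define v where "v i = (SOME z. z \<in> K i)" for i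
  have vK: "v i \<in> K i" if "i \<in> {1..n}" for i
    unfolding v_def using neK[OF that] by (auto intro: someI_ex)
  obtain a0 :: "real \<times> nat \<Rightarrow> 'a" where a0: "\<forall>i\<in>{1..n}. vl a0 (x i) = v i"
    using interpolate by blast
  define R where "R = cost a0"
  define Fe where "Fe = {a :: real \<times> nat \<Rightarrow> 'a. \<forall>i\<in>{1..n}. vl a (x i) \<in> K i}"
  define B where "B = PiE UNIV (\<lambda>p. if p \<in> II then cball (0::'a) R else {0})"
  have cB: "compact B"
  proof -
    have "compactin (product_topology (\<lambda>_. euclidean) UNIV) B"
      unfolding B_def compactin_PiE by (auto simp: compactin_euclidean_iff)
    then show ?thesis by (simp add: euclidean_product_topology compactin_euclidean_iff)
  qed
  have clF: "closed Fe"
  proof -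
    have "Fe = (\<Inter>i\<in>{1..n}. (\<lambda>a. vl a (x i)) -` K i)" unfolding Fe_def by auto
    also have "closed \<dots>" by (intro closed_INT ballI closed_vimage closedK cont_vl)
    finally show ?thesis .
  qed
  define S where "S = B \<inter> Fe"
  have cS: "compact S" unfolding S_def using cB clF by (rule compact_Int_closed)
  define a0' where "a0' = (\<lambda>p. if p \<in> II then a0 p else 0)"
  have a0'S: "a0' \<in> S"
  proof -
    have "norm (a0 p) \<le> R" if "p \<in> II" for p
      unfolding R_def cost_def using that finII by (intro member_le_sum) auto
    then have "a0' \<in> B" unfolding B_def a0'_def by auto
    moreover have "a0' \<in> Fe" unfolding Fe_def a0'_def using a0 vK by (auto simp: restrict_vl)
    ultimately show ?thesis unfolding S_def by auto
  qed
  then have "S \<noteq> {}" by auto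
  from continuous_attains_inf[OF cS this cont_cost]
  obtain as where asS: "as \<in> S" and asmin: "\<And>b. b \<in> S \<Longrightarrow> cost as \<le> cost b" by blast
  have opt: "cost as \<le> cost b" if "b \<in> Fe" for b
  proof (cases "cost b \<le> R")
    case True
    define b' where "b' = (\<lambda>p. if p \<in> II then b p else 0)"
    have "norm (b p) \<le> R" if "p \<in> II" for p
    proof -
      have "norm (b p) \<le> cost b" unfolding cost_def using that finII by (intro member_le_sum) auto
      then show ?thesis using True by simp
    qed
    then have "b' \<in> B" unfolding B_def b'_def by auto
    moreover have "b' \<in> Fe" using that unfolding Fe_def b'_def by (simp add: restrict_vl)
    ultimately have "cost as \<le> cost b'" using asmin S_def by auto
    then show ?thesis unfolding b'_def restrict_cost .
  next
    case False
    have "cost as \<le> cost a0'" using asmin[OF a0'S] .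
    also have "\<dots> = R" unfolding a0'_def restrict_cost R_def ..
    finally show ?thesis using False by simp
  qed
  obtain M h where Mh: "is_vmeasure M h" "supported_in M h ({-1, 1} \<times> x ` {1..n})"
    "\<And>t. fmu M h t = vl as t" "tv M h = cost as"
    using realize[of as] by blast
  have feas: "\<forall>i\<in>{1..n}. fmu M h (x i) \<in> K i" using asS unfolding S_def Fe_def Mh(3) by auto
  have "tv M h \<le> tv M' h'" if F': "is_vmeasure M' h'" "\<forall>i\<in>{1..n}. fmu M' h' (x i) \<in> K i" for M' h'
  proof -
    obtain b where b: "\<forall>i\<in>{1..n}. vl b (x i) = fmu M' h' (x i)" "cost b \<le> tv M' h'"
      using reduce[OF F'(1)] by blast
    have "b \<in> Fe" unfolding Fe_def using b(1) F'(2) by auto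
    then have "cost as \<le> cost b" by (rule opt)
    then show ?thesis using b(2) Mh(4) by simp
  qed
  then show ?thesis using Mh feas by blast
qed

end

theorem proposition1:
  fixes n :: nat and x :: "nat \<Rightarrow> real"
  assumes "n \<ge> 2"
    and "x 1 = -1" and "x n = 1"
    and "\<And>i j. i \<in> {1..n} \<Longrightarrow> j \<in> {1..n} \<Longrightarrow> i < j \<Longrightarrow> x i < x j"
  shows "(\<forall>y :: nat \<Rightarrow> real. \<exists>M h. regr_feasible n x y M h
            \<and> supported_in M h ({-1, 1} \<times> x ` {1..n})
            \<and> (\<forall>M' h'. regr_feasible n x y M' h' \<longrightarrow> tv M h \<le> tv M' h'))
       \<and> (\<forall>y :: nat \<Rightarrow> 'k::finite. \<exists>M h. class_feasible n x y M h
            \<and> supported_in M h ({-1, 1} \<times> x ` {1..n})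
            \<and> (\<forall>M' h'. class_feasible n x y M' h' \<longrightarrow> tv M h \<le> tv M' h'))"
proof -
  interpret grid n x using assms by unfold_locales auto
  show ?thesis
  proof (intro conjI allI)
    fix y :: "nat \<Rightarrow> real"
    have eq: "regr_feasible n x y M h \<longleftrightarrow> (is_vmeasure M h \<and> (\<forall>i\<in>{1..n}. fmu M h (x i) \<in> {y i}))"
      for M h unfolding regr_feasible_def by simp
    show "\<exists>M h. regr_feasible n x y M h
            \<and> supported_in M h ({-1, 1} \<times> x ` {1..n})
            \<and> (\<forall>M' h'. regr_feasible n x y M' h' \<longrightarrow> tv M h \<le> tv M' h')"
      unfolding eq by (rule generic) auto
  next
    fix y :: "nat \<Rightarrow> 'k::finite"
    define K where "K i = {w :: real ^ 'k. \<forall>l. (axis (y i) 1 - axis l 1) \<bullet> w \<ge> (if y i \<noteq> l then 1 else 0)}" for i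
    have eq: "class_feasible n x y M h \<longleftrightarrow> (is_vmeasure M h \<and> (\<forall>i\<in>{1..n}. fmu M h (x i) \<in> K i))"
      for M h unfolding class_feasible_def K_def by simp
    have cl: "closed (K i)" for i
      unfolding K_def by (intro closed_Collect_all closed_Collect_le continuous_intros)
    have ne: "K i \<noteq> {}" for i
    proof -
      have "axis (y i) 1 \<in> K i" unfolding K_def by (auto simp: inner_diff_left inner_axis_axis)
      then show ?thesis by auto
    qed
    show "\<exists>M h. class_feasible n x y M h
            \<and> supported_in M h ({-1, 1} \<times> x ` {1..n})
            \<and> (\<forall>M' h'. class_feasible n x y M' h' \<longrightarrow> tv M h \<le> tv M' h')"
      unfolding eq by (rule generic) (use cl ne in auto)
  qed
qed

end
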